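(* Let $P$ be a poset, $\mathcal F$ a standard collection of upsets and $\mathcal I$ a standard collection of downsets of $P$ (treated as disjoint sets), and suppose there exists a canonical extension $e:P\to C$ of $P$ with respect to $(\mathcal F,\mathcal I)$. Order $\mathcal F$ by reverse inclusion and $\mathcal I$ by inclusion, let $e_{\mathcal F}(p)=p^\uparrow$ and $e_{\mathcal I}(p)=p^\downarrow$, and let $R_l\subseteq\mathcal F\times\mathcal I$ be defined by $F\,R_l\,I$ iff $e_{\mathcal F}^{-1}(F^\uparrow)\cap e_{\mathcal I}^{-1}(I^\downarrow)\ne\emptyset$ (equivalently, $F\cap I\neq\emptyset$). Then $(e_{\mathcal F},e_{\mathcal I},R_l)$ is a Galois polarity.
   Context: For an element $q$ of a poset, $q^\uparrow=\{q'\ge q\}$, $q^\downarrow=\{q'\le q\}$; $e^{-1}(Z)=\{p:e(p)\in Z\}$. A collection of upsets (downsets) of $P$ is standard if it contains all $p^\uparrow$ (all $p^\downarrow$). A completion is an order-embedding into a complete lattice. A canonical extension of $P$ w.r.t. $(\mathcal F,\mathcal I)$ is a completion $e:P\to C$ such that every $z\in C$ satisfies $z=\bigvee\{\bigwedge e[F]:F\in\mathcal F,\bigwedge e[F]\le z\}=\bigwedge\{\bigvee e[I]:I\in\mathcal I,\bigvee e[I]\ge z\}$, and such that $\bigwedge e[F]\le\bigvee e[I]$ with $F\in\mathcal F,I\in\mathcal I$ implies $F\cap I\ne\emptyset$. A meet-extension is an order-embedding $e:P\to X$ with $x=\bigwedge e[e^{-1}(x^\uparrow)]$ for all $x$; a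 join-extension dually. A Galois polarity is a triple $(e_X,e_Y,R)$ where $e_X:P\to X$ is a meet-extension, $e_Y:P\to Y$ a join-extension, $X,Y$ disjoint, $R\subseteq X\times Y$, such that there is a quasiorder $\preceq$ on $X\cup Y$ with: for $x\in X,y\in Y$, $x\preceq y$ iff $xRy$; and, writing $X\uplus_\preceq Y$ for the poset induced by $\preceq$ and $\iota_X,\iota_Y$ for the maps induced by inclusion, $\iota_X$ and $\iota_Y$ are order-embeddings, $\iota_X\circ e_X=\iota_Y\circ e_Y$, for every $S\subseteq P$ with $\bigwedge e_X[S]$ existing in $X$ we have $\iota_X(\bigwedge e_X[S])=\bigwedge\iota_X\circ e_X[S]$, and for every $T\subseteq P$ with $\bigvee e_Y[T]$ existing in $Y$ we have $\iota_Y(\bigvee e_Y[T])=\bigvee\iota_Y\circ e_Y[T]$. *)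

theory Defs
  imports Main
begin

definition is_poset :: "'a set \<Rightarrow> ('a \<Rightarrow> 'a \<Rightarrow> bool) \<Rightarrow> bool" where
  "is_poset A le \<longleftrightarrow>
     (\<forall>x\<in>A. le x x) \<and>
     (\<forall>x\<in>A. \<forall>y\<in>A. le x y \<and> le y x \<longrightarrow> x = y) \<and>
     (\<forall>x\<in>A. \<forall>y\<in>A. \<forall>z\<in>A. le x y \<and> le y z \<longrightarrow> le x z)"

definition is_quasiorder :: "'a set \<Rightarrow> ('a \<Rightarrow> 'a \<Rightarrow> bool) \<Rightarrow> bool" where
  "is_quasiorder A le \<longleftrightarrow>
     (\<forall>x\<in>A. le x x) \<and>
     (\<forall>x\<in>A. \<forall>y\<in>A. \<forall>z\<in>A. le x y \<and> le y z \<longrightarrow> le x z)"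

definition is_glb :: "'a set \<Rightarrow> ('a \<Rightarrow> 'a \<Rightarrow> bool) \<Rightarrow> 'a set \<Rightarrow> 'a \<Rightarrow> bool" where
  "is_glb A le S m \<longleftrightarrow> m \<in> A \<and> (\<forall>s\<in>S. le m s) \<and>
     (\<forall>z\<in>A. (\<forall>s\<in>S. le z s) \<longrightarrow> le z m)"

definition is_lub :: "'a set \<Rightarrow> ('a \<Rightarrow> 'a \<Rightarrow> bool) \<Rightarrow> 'a set \<Rightarrow> 'a \<Rightarrow> bool" where
  "is_lub A le S m \<longleftrightarrow> m \<in> A \<and> (\<forall>s\<in>S. le s m) \<and>
     (\<forall>z\<in>A. (\<forall>s\<in>S. le s z) \<longrightarrow> le m z)"

definition order_embedding ::
  "'a set \<Rightarrow> ('a \<Rightarrow> 'a \<Rightarrow> bool) \<Rightarrow> 'b set \<Rightarrow> ('b \<Rightarrow> 'b \<Rightarrow> bool) \<Rightarrow> ('a \<Rightarrow> 'b) \<Rightarrow> bool" where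
  "order_embedding A leA B leB f \<longleftrightarrow>
     f ` A \<subseteq> B \<and> (\<forall>x\<in>A. \<forall>y\<in>A. leA x y \<longleftrightarrow> leB (f x) (f y))"

definition is_upset :: "'p::order set \<Rightarrow> bool" where
  "is_upset U \<longleftrightarrow> (\<forall>p\<in>U. \<forall>q. p \<le> q \<longrightarrow> q \<in> U)"

definition is_downset :: "'p::order set \<Rightarrow> bool" where
  "is_downset D \<longleftrightarrow> (\<forall>p\<in>D. \<forall>q. q \<le> p \<longrightarrow> q \<in> D)"

definition up :: "'p::order \<Rightarrow> 'p set" where
  "up p = {q. p \<le> q}"

definition down :: "'p::order \<Rightarrow> 'p set" where
  "down p = {q. q \<le> p}"

definition standard_upsets :: "'p::order set set \<Rightarrow> bool" where
  "standard_upsets F \<longleftrightarrow> (\<forall>U\<in>F. is_upset U) \<and> (\<forall>p. up p \<in> F)"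

definition standard_downsets :: "'p::order set set \<Rightarrow> bool" where
  "standard_downsets I \<longleftrightarrow> (\<forall>D\<in>I. is_downset D) \<and> (\<forall>p. down p \<in> I)"

definition completion :: "('p::order \<Rightarrow> 'c::complete_lattice) \<Rightarrow> bool" where
  "completion e \<longleftrightarrow> (\<forall>p q. p \<le> q \<longleftrightarrow> e p \<le> e q)"

definition canonical_extension ::
  "'p::order set set \<Rightarrow> 'p set set \<Rightarrow> ('p \<Rightarrow> 'c::complete_lattice) \<Rightarrow> bool" where
  "canonical_extension F I e \<longleftrightarrow>
     completion e \<and>
     (\<forall>z. z = Sup {Inf (e ` U) | U. U \<in> F \<and> Inf (e ` U) \<le> z} \<and>
          z = Inf {Sup (e ` D) | D. D \<in> I \<and> z \<le> Sup (e ` D)}) \<and>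
     (\<forall>U\<in>F. \<forall>D\<in>I. Inf (e ` U) \<le> Sup (e ` D) \<longrightarrow> U \<inter> D \<noteq> {})"

definition meet_extension ::
  "('p::order \<Rightarrow> 'x) \<Rightarrow> 'x set \<Rightarrow> ('x \<Rightarrow> 'x \<Rightarrow> bool) \<Rightarrow> bool" where
  "meet_extension e X le \<longleftrightarrow>
     is_poset X le \<and> order_embedding UNIV (\<le>) X le e \<and>
     (\<forall>x\<in>X. is_glb X le (e ` {p. le x (e p)}) x)"

definition join_extension ::
  "('p::order \<Rightarrow> 'y) \<Rightarrow> 'y set \<Rightarrow> ('y \<Rightarrow> 'y \<Rightarrow> bool) \<Rightarrow> bool" where
  "join_extension e Y le \<longleftrightarrow>
     is_poset Y le \<and> order_embedding UNIV (\<le>) Y le e \<and>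
     (\<forall>y\<in>Y. is_lub Y le (e ` {p. le (e p) y}) y)"

text \<open>The poset induced by a quasiorder q on a carrier D: equivalence classes,
  ordered by q between representatives.\<close>
definition qclass :: "'a set \<Rightarrow> ('a \<Rightarrow> 'a \<Rightarrow> bool) \<Rightarrow> 'a \<Rightarrow> 'a set" where
  "qclass D q a = {b \<in> D. q a b \<and> q b a}"

definition qcarrier :: "'a set \<Rightarrow> ('a \<Rightarrow> 'a \<Rightarrow> bool) \<Rightarrow> 'a set set" where
  "qcarrier D q = qclass D q ` D"

definition qle :: "('a \<Rightarrow> 'a \<Rightarrow> bool) \<Rightarrow> 'a set \<Rightarrow> 'a set \<Rightarrow> bool" where
  "qle q A B \<longleftrightarrow> (\<exists>a\<in>A. \<exists>b\<in>B. q a b)"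

text \<open>X and Y are made disjoint by tagging with Inl / Inr; the carrier of
  the disjoint union X \<uplus> Y is Inl ` X \<union> Inr ` Y.\<close>
definition galois_polarity ::
  "('p::order \<Rightarrow> 'x) \<Rightarrow> 'x set \<Rightarrow> ('x \<Rightarrow> 'x \<Rightarrow> bool) \<Rightarrow>
   ('p \<Rightarrow> 'y) \<Rightarrow> 'y set \<Rightarrow> ('y \<Rightarrow> 'y \<Rightarrow> bool) \<Rightarrow> ('x \<times> 'y) set \<Rightarrow> bool" where
  "galois_polarity eX X leX eY Y leY R \<longleftrightarrow>
     meet_extension eX X leX \<and> join_extension eY Y leY \<and> R \<subseteq> X \<times> Y \<and>
     (\<exists>q :: ('x + 'y) \<Rightarrow> ('x + 'y) \<Rightarrow> bool.
        let D = Inl ` X \<union> Inr ` Y;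
            Q = qcarrier D q;
            iX = (\<lambda>x. qclass D q (Inl x));
            iY = (\<lambda>y. qclass D q (Inr y))
        in is_quasiorder D q \<and>
           (\<forall>x\<in>X. \<forall>y\<in>Y. q (Inl x) (Inr y) \<longleftrightarrow> (x, y) \<in> R) \<and>
           order_embedding X leX Q (qle q) iX \<and>
           order_embedding Y leY Q (qle q) iY \<and>
           (\<forall>p. iX (eX p) = iY (eY p)) \<and>
           (\<forall>S m. is_glb X leX (eX ` S) m \<longrightarrow> is_glb Q (qle q) ((iX \<circ> eX) ` S) (iX m)) \<and>
           (\<forall>T m. is_lub Y leY (eY ` T) m \<longrightarrow> is_lub Q (qle q) ((iY \<circ> eY) ` T) (iY m)))"

end

theory Submission
  imports Defs
begin

lemma up_sub_iff: "up q \<subseteq> up p \<longleftrightarrow> (p::'p::order) \<le> q"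
  unfolding up_def by auto

lemma down_sub_iff: "down p \<subseteq> down q \<longleftrightarrow> (p::'p::order) \<le> q"
  unfolding down_def by auto

lemma up_in_upset: "is_upset U \<Longrightarrow> up p \<subseteq> U \<longleftrightarrow> p \<in> U"
  unfolding is_upset_def up_def by auto

lemma down_in_downset: "is_downset U \<Longrightarrow> down p \<subseteq> U \<longleftrightarrow> p \<in> U"
  unfolding is_downset_def down_def by auto

lemma meet_ext_up:
  assumes "standard_upsets F"
  shows "meet_extension up F (\<lambda>U V. V \<subseteq> U)"
proof -
  have ups: "\<And>U. U \<in> F \<Longrightarrow> is_upset U" using assms unfolding standard_upsets_def by auto
  have inF: "\<And>p. up p \<in> F" using assms unfolding standard_upsets_def by auto
  show ?thesis
    unfolding meet_extension_def is_poset_def order_embedding_def is_glb_def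
    using inF
    apply (auto simp: up_in_upset[OF ups] up_sub_iff)
    done
qed

lemma join_ext_down:
  assumes "standard_downsets I"
  shows "join_extension down I (\<lambda>U V. U \<subseteq> V)"
proof -
  have ds: "\<And>U. U \<in> I \<Longrightarrow> is_downset U" using assms unfolding standard_downsets_def by auto
  have inI: "\<And>p. down p \<in> I" using assms unfolding standard_downsets_def by auto
  show ?thesis
    unfolding join_extension_def is_poset_def order_embedding_def is_lub_def
    using inI
    apply (auto simp: down_in_downset[OF ds] down_sub_iff)
    done
qed

lemma qclass_f:
  fixes f :: "'a \<Rightarrow> 'c::order"
  shows "qclass D (\<lambda>a b. f a \<le> f b) a = {b \<in> D. f b = f a}"
  unfolding qclass_def by (auto intro: order.antisym)

lemma qclass_eqI:
  fixes f :: "'a \<Rightarrow> 'c::order"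
  shows "f a = f b \<Longrightarrow> qclass D (\<lambda>a b. f a \<le> f b) a = qclass D (\<lambda>a b. f a \<le> f b) b"
  unfolding qclass_f by auto

lemma qle_cls:
  fixes f :: "'a \<Rightarrow> 'c::order"
  assumes "a \<in> D" "b \<in> D"
  shows "qle (\<lambda>a b. f a \<le> f b) (qclass D (\<lambda>a b. f a \<le> f b) a) (qclass D (\<lambda>a b. f a \<le> f b) b)
     \<longleftrightarrow> f a \<le> f b"
  unfolding qle_def qclass_f using assms by auto

lemma quasi_f:
  fixes f :: "'a \<Rightarrow> 'c::order"
  shows "is_quasiorder D (\<lambda>a b. f a \<le> f b)"
  unfolding is_quasiorder_def by auto

lemma qglb:
  fixes f :: "'a \<Rightarrow> 'c::order"
  assumes "a \<in> D" "T \<subseteq> D" "\<And>t. t \<in> T \<Longrightarrow> f a \<le> f t"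
    "\<And>c. c \<in> D \<Longrightarrow> (\<forall>t\<in>T. f c \<le> f t) \<Longrightarrow> f c \<le> f a"
  shows "is_glb (qcarrier D (\<lambda>a b. f a \<le> f b)) (qle (\<lambda>a b. f a \<le> f b))
           (qclass D (\<lambda>a b. f a \<le> f b) ` T) (qclass D (\<lambda>a b. f a \<le> f b) a)"
  unfolding is_glb_def qcarrier_def
proof (intro conjI ballI)
  show "qclass D (\<lambda>a b. f a \<le> f b) a \<in> qclass D (\<lambda>a b. f a \<le> f b) ` D" using assms(1) by auto
next
  fix s assume "s \<in> qclass D (\<lambda>a b. f a \<le> f b) ` T"
  then obtain t where "t \<in> T" "s = qclass D (\<lambda>a b. f a \<le> f b) t" by auto
  then show "qle (\<lambda>a b. f a \<le> f b) (qclass D (\<lambda>a b. f a \<le> f b) a) s"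
    using qle_cls[of a D t f] assms by auto
next
  fix z assume "z \<in> qclass D (\<lambda>a b. f a \<le> f b) ` D"
  then obtain c where c: "c \<in> D" "z = qclass D (\<lambda>a b. f a \<le> f b) c" by auto
  show "(\<forall>s\<in>qclass D (\<lambda>a b. f a \<le> f b) ` T. qle (\<lambda>a b. f a \<le> f b) z s) \<longrightarrow>
          qle (\<lambda>a b. f a \<le> f b) z (qclass D (\<lambda>a b. f a \<le> f b) a)"
  proof
    assume "\<forall>s\<in>qclass D (\<lambda>a b. f a \<le> f b) ` T. qle (\<lambda>a b. f a \<le> f b) z s"
    then have "\<forall>t\<in>T. f c \<le> f t" using qle_cls[of c D _ f] c assms(2) by auto
    then show "qle (\<lambda>a b. f a \<le> f b) z (qclass D (\<lambda>a b. f a \<le> f b) a)"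
      using assms(4)[OF c(1)] qle_cls[of c D a f] c assms(1) by auto
  qed
qed

lemma qlub:
  fixes f :: "'a \<Rightarrow> 'c::order"
  assumes "a \<in> D" "T \<subseteq> D" "\<And>t. t \<in> T \<Longrightarrow> f t \<le> f a"
    "\<And>c. c \<in> D \<Longrightarrow> (\<forall>t\<in>T. f t \<le> f c) \<Longrightarrow> f a \<le> f c"
  shows "is_lub (qcarrier D (\<lambda>a b. f a \<le> f b)) (qle (\<lambda>a b. f a \<le> f b))
           (qclass D (\<lambda>a b. f a \<le> f b) ` T) (qclass D (\<lambda>a b. f a \<le> f b) a)"
  unfolding is_lub_def qcarrier_def
proof (intro conjI ballI)
  show "qclass D (\<lambda>a b. f a \<le> f b) a \<in> qclass D (\<lambda>a b. f a \<le> f b) ` D" using assms(1) by auto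
next
  fix s assume "s \<in> qclass D (\<lambda>a b. f a \<le> f b) ` T"
  then obtain t where "t \<in> T" "s = qclass D (\<lambda>a b. f a \<le> f b) t" by auto
  then show "qle (\<lambda>a b. f a \<le> f b) s (qclass D (\<lambda>a b. f a \<le> f b) a)"
    using qle_cls[of t D a f] assms by auto
next
  fix z assume "z \<in> qclass D (\<lambda>a b. f a \<le> f b) ` D"
  then obtain c where c: "c \<in> D" "z = qclass D (\<lambda>a b. f a \<le> f b) c" by auto
  show "(\<forall>s\<in>qclass D (\<lambda>a b. f a \<le> f b) ` T. qle (\<lambda>a b. f a \<le> f b) s z) \<longrightarrow>
          qle (\<lambda>a b. f a \<le> f b) (qclass D (\<lambda>a b. f a \<le> f b) a) z"
  proof
    assume "\<forall>s\<in>qclass D (\<lambda>a b. f a \<le> f b) ` T. qle (\<lambda>a b. f a \<le> f b) s z"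
    then have "\<forall>t\<in>T. f t \<le> f c" using qle_cls[of _ D c f] c assms(2) by auto
    then show "qle (\<lambda>a b. f a \<le> f b) (qclass D (\<lambda>a b. f a \<le> f b) a) z"
      using assms(4)[OF c(1)] qle_cls[of a D c f] c assms(1) by auto
  qed
qed

theorem mainTheorem8:
  fixes F I :: "'p::order set set"
  assumes "standard_upsets F"
    and "standard_downsets I"
    and "\<exists>e :: 'p \<Rightarrow> 'c::complete_lattice. canonical_extension F I e"
  shows "galois_polarity
           up F (\<lambda>U V. V \<subseteq> U)
           down I (\<lambda>A B. A \<subseteq> B)
           {(U, D). U \<in> F \<and> D \<in> I \<and>
              {p. up p \<subseteq> U} \<inter> {p. down p \<subseteq> D} \<noteq> {}}"
proof -
  obtain e :: "'p \<Rightarrow> 'c" where ce: "canonical_extension F I e" using assms(3) by blast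
  have emb: "\<And>p q. e p \<le> e q \<longleftrightarrow> p \<le> q" using ce
    unfolding canonical_extension_def completion_def by blast
  have cpt: "\<And>U D. U \<in> F \<Longrightarrow> D \<in> I \<Longrightarrow> Inf (e ` U) \<le> Sup (e ` D) \<Longrightarrow> U \<inter> D \<noteq> {}"
    using ce unfolding canonical_extension_def by blast
  have ups: "\<And>U. U \<in> F \<Longrightarrow> is_upset U" using assms(1) unfolding standard_upsets_def by auto
  have inF: "\<And>p. up p \<in> F" using assms(1) unfolding standard_upsets_def by auto
  have dss: "\<And>U. U \<in> I \<Longrightarrow> is_downset U" using assms(2) unfolding standard_downsets_def by auto
  have inI: "\<And>p. down p \<in> I" using assms(2) unfolding standard_downsets_def by auto
  have L4u: "\<And>p. Inf (e ` up p) = e p"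
  proof -
    fix p
    show "Inf (e ` up p) = e p"
      by (rule order.antisym, rule Inf_lower, simp add: up_def,
          rule Inf_greatest, auto simp: up_def emb)
  qed
  have L4d: "\<And>p. Sup (e ` down p) = e p"
  proof -
    fix p
    show "Sup (e ` down p) = e p"
      by (rule order.antisym, rule Sup_least, auto simp: down_def emb intro: Sup_upper)
  qed
  have L1: "\<And>U V. U \<in> F \<Longrightarrow> V \<in> F \<Longrightarrow> Inf (e ` U) \<le> Inf (e ` V) \<longleftrightarrow> V \<subseteq> U"
  proof
    fix U V assume U: "U \<in> F" and V: "V \<in> F" and le: "Inf (e ` U) \<le> Inf (e ` V)"
    show "V \<subseteq> U"
    proof
      fix v assume v: "v \<in> V"
      have "Inf (e ` V) \<le> e v" using v by (simp add: INF_lower)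
      then have "Inf (e ` U) \<le> Sup (e ` down v)" using le L4d by (metis order.trans)
      then obtain u where "u \<in> U" "u \<le> v" using cpt[OF U inI] by (auto simp: down_def)
      then show "v \<in> U" using ups[OF U] unfolding is_upset_def by blast
    qed
  next
    fix U V :: "'p set" assume "V \<subseteq> U" then show "Inf (e ` U) \<le> Inf (e ` V)" by (simp add: INF_superset_mono)
  qed
  have L2: "\<And>U V. U \<in> I \<Longrightarrow> V \<in> I \<Longrightarrow> Sup (e ` U) \<le> Sup (e ` V) \<longleftrightarrow> U \<subseteq> V"
  proof
    fix U V assume U: "U \<in> I" and V: "V \<in> I" and le: "Sup (e ` U) \<le> Sup (e ` V)"
    show "U \<subseteq> V"
    proof
      fix v assume v: "v \<in> U"
      have "e v \<le> Sup (e ` U)" using v by (simp add: SUP_upper)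
      then have "Inf (e ` up v) \<le> Sup (e ` V)" using le L4u by (metis order.trans)
      then obtain u where "u \<in> V" "v \<le> u" using cpt[OF inF V] by (auto simp: up_def)
      then show "v \<in> V" using dss[OF V] unfolding is_downset_def by blast
    qed
  next
    fix U V :: "'p set" assume "U \<subseteq> V" then show "Sup (e ` U) \<le> Sup (e ` V)" by (simp add: SUP_subset_mono)
  qed
  have L3: "\<And>U V. U \<in> F \<Longrightarrow> V \<in> I \<Longrightarrow> Inf (e ` U) \<le> Sup (e ` V) \<longleftrightarrow> U \<inter> V \<noteq> {}"
  proof
    fix U V assume "U \<in> F" "V \<in> I" "Inf (e ` U) \<le> Sup (e ` V)"
    then show "U \<inter> V \<noteq> {}" using cpt by blast
  next
    fix U V :: "'p set" assume "U \<inter> V \<noteq> {}"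
    then obtain p where "p \<in> U" "p \<in> V" by blast
    then show "Inf (e ` U) \<le> Sup (e ` V)"
      by (meson INF_lower SUP_upper order.trans)
  qed
  define f :: "'p set + 'p set \<Rightarrow> 'c" where "f = case_sum (\<lambda>U. Inf (e ` U)) (\<lambda>D. Sup (e ` D))"
  define DD where "DD = Inl ` F \<union> Inr ` I"
  have fl: "\<And>U. f (Inl U) = Inf (e ` U)" and fr: "\<And>U. f (Inr U) = Sup (e ` U)"
    unfolding f_def by auto
  have ex: "\<exists>q :: ('p set + 'p set) \<Rightarrow> ('p set + 'p set) \<Rightarrow> bool.
        let D = Inl ` F \<union> Inr ` I;
            Q = qcarrier D q;
            iX = (\<lambda>x. qclass D q (Inl x));
            iY = (\<lambda>y. qclass D q (Inr y))
        in is_quasiorder D q \<and>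
           (\<forall>x\<in>F. \<forall>y\<in>I. q (Inl x) (Inr y) \<longleftrightarrow> (x, y) \<in> {(U, D). U \<in> F \<and> D \<in> I \<and>
              {p. up p \<subseteq> U} \<inter> {p. down p \<subseteq> D} \<noteq> {}}) \<and>
           order_embedding F (\<lambda>U V. V \<subseteq> U) Q (qle q) iX \<and>
           order_embedding I (\<lambda>A B. A \<subseteq> B) Q (qle q) iY \<and>
           (\<forall>p. iX (up p) = iY (down p)) \<and>
           (\<forall>S m. is_glb F (\<lambda>U V. V \<subseteq> U) (up ` S) m \<longrightarrow> is_glb Q (qle q) ((iX \<circ> up) ` S) (iX m)) \<and>
           (\<forall>T m. is_lub I (\<lambda>A B. A \<subseteq> B) (down ` T) m \<longrightarrow> is_lub Q (qle q) ((iY \<circ> down) ` T) (iY m))"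
  proof (rule exI[where x="\<lambda>a b. f a \<le> f b"], unfold Let_def DD_def[symmetric], intro conjI)
    show "is_quasiorder DD (\<lambda>a b. f a \<le> f b)" by (rule quasi_f)
    show "\<forall>x\<in>F. \<forall>y\<in>I. (f (Inl x) \<le> f (Inr y)) = ((x, y) \<in> {(U, D). U \<in> F \<and> D \<in> I \<and>
              {p. up p \<subseteq> U} \<inter> {p. down p \<subseteq> D} \<noteq> {}})"
      using L3 by (auto simp: fl fr up_in_upset[OF ups] down_in_downset[OF dss])
    show "order_embedding F (\<lambda>U V. V \<subseteq> U) (qcarrier DD (\<lambda>a b. f a \<le> f b)) (qle (\<lambda>a b. f a \<le> f b))
       (\<lambda>x. qclass DD (\<lambda>a b. f a \<le> f b) (Inl x))"
      unfolding order_embedding_def qcarrier_def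
      using qle_cls[of "Inl _" DD "Inl _" f] L1 by (auto simp: DD_def fl)
    show "order_embedding I (\<lambda>A B. A \<subseteq> B) (qcarrier DD (\<lambda>a b. f a \<le> f b)) (qle (\<lambda>a b. f a \<le> f b))
       (\<lambda>x. qclass DD (\<lambda>a b. f a \<le> f b) (Inr x))"
      unfolding order_embedding_def qcarrier_def
      using qle_cls[of "Inr _" DD "Inr _" f] L2 by (auto simp: DD_def fr)
    show "\<forall>p. qclass DD (\<lambda>a b. f a \<le> f b) (Inl (up p)) = qclass DD (\<lambda>a b. f a \<le> f b) (Inr (down p))"
      by (auto intro!: qclass_eqI simp: fl fr L4u L4d)
    show "\<forall>S m. is_glb F (\<lambda>U V. V \<subseteq> U) (up ` S) m \<longrightarrow>
        is_glb (qcarrier DD (\<lambda>a b. f a \<le> f b)) (qle (\<lambda>a b. f a \<le> f b))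
         (((\<lambda>x. qclass DD (\<lambda>a b. f a \<le> f b) (Inl x)) \<circ> up) ` S) (qclass DD (\<lambda>a b. f a \<le> f b) (Inl m))"
    proof (intro allI impI)
      fix S m assume g: "is_glb F (\<lambda>U V. V \<subseteq> U) (up ` S) m"
      have mF: "m \<in> F" and ub: "\<And>s. s \<in> S \<Longrightarrow> up s \<subseteq> m"
        and least: "\<And>z. z \<in> F \<Longrightarrow> (\<forall>s\<in>S. up s \<subseteq> z) \<Longrightarrow> m \<subseteq> z"
        using g unfolding is_glb_def by auto
      have img: "((\<lambda>x. qclass DD (\<lambda>a b. f a \<le> f b) (Inl x)) \<circ> up) ` S
          = qclass DD (\<lambda>a b. f a \<le> f b) ` (Inl ` up ` S)" by auto
      show "is_glb (qcarrier DD (\<lambda>a b. f a \<le> f b)) (qle (\<lambda>a b. f a \<le> f b))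
         (((\<lambda>x. qclass DD (\<lambda>a b. f a \<le> f b) (Inl x)) \<circ> up) ` S) (qclass DD (\<lambda>a b. f a \<le> f b) (Inl m))"
        unfolding img
      proof (rule qglb)
        show "Inl m \<in> DD" using mF by (simp add: DD_def)
        show "Inl ` up ` S \<subseteq> DD" using inF by (auto simp: DD_def)
        show "\<And>t. t \<in> Inl ` up ` S \<Longrightarrow> f (Inl m) \<le> f t" using ub L1 mF inF by (auto simp: fl)
        fix c assume c: "c \<in> DD" and lb: "\<forall>t\<in>Inl ` up ` S. f c \<le> f t"
        have lbs: "\<And>s. s \<in> S \<Longrightarrow> f c \<le> e s" using lb L4u by (auto simp: fl)
        show "f c \<le> f (Inl m)"
        proof (cases c)
          case (Inl U)
          then have U: "U \<in> F" using c by (auto simp: DD_def)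
          have "\<forall>s\<in>S. up s \<subseteq> U" using lbs L1[OF U inF] L4u Inl by (auto simp: fl)
          then show ?thesis using least[OF U] L1[OF U mF] Inl by (simp add: fl)
        next
          case (Inr V)
          then have V: "V \<in> I" using c by (auto simp: DD_def)
          have "e d \<le> Inf (e ` m)" if d: "d \<in> V" for d
          proof -
            have "\<forall>s\<in>S. d \<le> s"
            proof
              fix s assume "s \<in> S"
              then have "Sup (e ` V) \<le> e s" using lbs Inr by (auto simp: fr)
              then have "e d \<le> e s" using d by (meson SUP_upper order.trans)
              then show "d \<le> s" using emb by blast
            qed
            then have "m \<subseteq> up d" using least[OF inF] up_sub_iff by blast
            then show ?thesis using L1[OF inF mF] L4u by metis
          qed
          then show ?thesis using Inr by (auto simp: fr fl intro: SUP_least)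
        qed
      qed
    qed
    show "\<forall>T m. is_lub I (\<lambda>A B. A \<subseteq> B) (down ` T) m \<longrightarrow>
        is_lub (qcarrier DD (\<lambda>a b. f a \<le> f b)) (qle (\<lambda>a b. f a \<le> f b))
         (((\<lambda>x. qclass DD (\<lambda>a b. f a \<le> f b) (Inr x)) \<circ> down) ` T) (qclass DD (\<lambda>a b. f a \<le> f b) (Inr m))"
    proof (intro allI impI)
      fix S m assume g: "is_lub I (\<lambda>A B. A \<subseteq> B) (down ` S) m"
      have mF: "m \<in> I" and ub: "\<And>s. s \<in> S \<Longrightarrow> down s \<subseteq> m"
        and least: "\<And>z. z \<in> I \<Longrightarrow> (\<forall>s\<in>S. down s \<subseteq> z) \<Longrightarrow> m \<subseteq> z"
        using g unfolding is_lub_def by auto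
      have img: "((\<lambda>x. qclass DD (\<lambda>a b. f a \<le> f b) (Inr x)) \<circ> down) ` S
          = qclass DD (\<lambda>a b. f a \<le> f b) ` (Inr ` down ` S)" by auto
      show "is_lub (qcarrier DD (\<lambda>a b. f a \<le> f b)) (qle (\<lambda>a b. f a \<le> f b))
         (((\<lambda>x. qclass DD (\<lambda>a b. f a \<le> f b) (Inr x)) \<circ> down) ` S) (qclass DD (\<lambda>a b. f a \<le> f b) (Inr m))"
        unfolding img
      proof (rule qlub)
        show "Inr m \<in> DD" using mF by (simp add: DD_def)
        show "Inr ` down ` S \<subseteq> DD" using inI by (auto simp: DD_def)
        show "\<And>t. t \<in> Inr ` down ` S \<Longrightarrow> f t \<le> f (Inr m)" using ub L2 mF inI by (auto simp: fr)
        fix c assume c: "c \<in> DD" and lb: "\<forall>t\<in>Inr ` down ` S. f t \<le> f c"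
        have lbs: "\<And>s. s \<in> S \<Longrightarrow> e s \<le> f c" using lb L4d by (auto simp: fr)
        show "f (Inr m) \<le> f c"
        proof (cases c)
          case (Inr U)
          then have U: "U \<in> I" using c by (auto simp: DD_def)
          have "\<forall>s\<in>S. down s \<subseteq> U" using lbs L2[OF inI U] L4d Inr by (auto simp: fr)
          then show ?thesis using least[OF U] L2[OF mF U] Inr by (simp add: fr)
        next
          case (Inl V)
          then have V: "V \<in> F" using c by (auto simp: DD_def)
          have "Sup (e ` m) \<le> e d" if d: "d \<in> V" for d
          proof -
            have "\<forall>s\<in>S. s \<le> d"
            proof
              fix s assume "s \<in> S"
              then have "e s \<le> Inf (e ` V)" using lbs Inl by (auto simp: fl)
              then have "e s \<le> e d" using d by (meson INF_lower order.trans)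
              then show "s \<le> d" using emb by blast
            qed
            then have "m \<subseteq> down d" using least[OF inI] down_sub_iff by blast
            then show ?thesis using L2[OF mF inI] L4d by metis
          qed
          then show ?thesis using Inl by (auto simp: fr fl intro: INF_greatest)
        qed
      qed
    qed
  qed
  show ?thesis
    unfolding galois_polarity_def
    using meet_ext_up[OF assms(1)] join_ext_down[OF assms(2)] ex
    by (auto simp: up_in_upset[OF ups] down_in_downset[OF dss])
qed

end
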